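(* Let $n\ge 2$, $1\le k\le n$, and let $r_1 \le r_2 \le \cdots \le r_k$ be positive integers. Let $f(x) = x_1^{2r_1} + x_2^{2r_2} + \cdots + x_k^{2r_k}$ on $\mathbb{R}^n$. If $k \ge 2$, then for any bounded open neighborhood $U$ of $0$ and any $\gamma>0$, \[ \int_U \left|\frac{\nabla f}{f}\right|^\gamma\,dV < \infty \iff \gamma < 1 + \frac{r_1}{r_2} + \cdots + \frac{r_1}{r_k}. \] If $k=1$ (i.e. $f=x_1^{2r_1}$), the integral is finite if and only if $\gamma<1$. *)

theory Defs
  imports "HOL-Analysis.Analysis"
begin

definition grad :: "(real^'n \<Rightarrow> real) \<Rightarrow> real^'n \<Rightarrow> real^'n" where
  "grad g x = (\<chi> i. deriv (\<lambda>t. g (x + t *\<^sub>R axis i 1)) 0)"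

text \<open>f(x) = x_1^(2 r_1) + ... + x_k^(2 r_k), where coordinate number i of R^n is
  the component c i (c labels the coordinates 1..n).\<close>
definition fsum :: "(nat \<Rightarrow> nat) \<Rightarrow> nat \<Rightarrow> (nat \<Rightarrow> 'n) \<Rightarrow> real^'n \<Rightarrow> real" where
  "fsum r k c x = (\<Sum>i=1..k. (x $ c i) ^ (2 * r i))"

end

theory Submission
  imports Defs
begin


lemma box_meas:
  fixes c :: "nat \<Rightarrow> 'n::finite" and L H :: "nat \<Rightarrow> real"
  assumes bij: "bij_betw c {1..n} UNIV" and le: "\<forall>j\<in>{1..n}. L j \<le> H j"
  shows "{x::real^'n. \<forall>j\<in>{1..n}. L j \<le> x $ c j \<and> x $ c j \<le> H j} \<in> sets lborel"
    "emeasure lborel {x::real^'n. \<forall>j\<in>{1..n}. L j \<le> x $ c j \<and> x $ c j \<le> H j}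
       = ennreal (\<Prod>j\<in>{1..n}. H j - L j)"
proof -
  define d where "d = the_inv_into {1..n} c"
  have inj: "inj_on c {1..n}" and sur: "c ` {1..n} = UNIV" using bij by (auto simp: bij_betw_def)
  have dc: "\<And>j. j \<in> {1..n} \<Longrightarrow> d (c j) = j" unfolding d_def by (rule the_inv_into_f_f[OF inj])
  have cd: "\<And>i. c (d i) = i" unfolding d_def using sur by (metis UNIV_I f_the_inv_into_f inj)
  have dn: "\<And>i. d i \<in> {1..n}" unfolding d_def using sur inj
    by (metis UNIV_I the_inv_into_into subset_refl)
  define a where "a = (\<chi> i. L (d i))"
  define b where "b = (\<chi> i. H (d i))"
  have eq: "{x::real^'n. \<forall>j\<in>{1..n}. L j \<le> x $ c j \<and> x $ c j \<le> H j} = cbox a b"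
  proof (rule set_eqI, rule iffI)
    fix x :: "real^'n" assume "x \<in> {x::real^'n. \<forall>j\<in>{1..n}. L j \<le> x $ c j \<and> x $ c j \<le> H j}"
    then have "\<forall>j\<in>{1..n}. L j \<le> x $ c j \<and> x $ c j \<le> H j" by simp
    then have "\<forall>i. L (d i) \<le> x $ i \<and> x $ i \<le> H (d i)" using dn cd by metis
    then show "x \<in> cbox a b" by (simp add: mem_box_cart a_def b_def)
  next
    fix x :: "real^'n" assume "x \<in> cbox a b"
    then have "\<forall>i. L (d i) \<le> x $ i \<and> x $ i \<le> H (d i)" by (simp add: mem_box_cart a_def b_def)
    then have "\<forall>j\<in>{1..n}. L j \<le> x $ c j \<and> x $ c j \<le> H j" using dc by metis
    then show "x \<in> {x::real^'n. \<forall>j\<in>{1..n}. L j \<le> x $ c j \<and> x $ c j \<le> H j}" by simp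
  qed
  show "{x::real^'n. \<forall>j\<in>{1..n}. L j \<le> x $ c j \<and> x $ c j \<le> H j} \<in> sets lborel"
    unfolding eq by simp
  have ne: "cbox a b \<noteq> {}" using le dn by (auto simp: box_ne_empty inner_axis Basis_vec_def a_def b_def)
  have "emeasure lborel (cbox a b) = ennreal (measure lborel (cbox a b))"
    using emeasure_lborel_cbox_finite[of a b] by (simp add: emeasure_eq_ennreal_measure less_top[symmetric])
  also have "measure lborel (cbox a b) = (\<Prod>i\<in>UNIV. b$i - a$i)" by (rule content_cbox_cart[OF ne])
  also have "\<dots> = (\<Prod>j\<in>{1..n}. H j - L j)"
  proof -
    have "(\<Prod>i\<in>UNIV. b$i - a$i) = (\<Prod>i\<in>c ` {1..n}. H (d i) - L (d i))"
      by (simp only: sur) (simp add: a_def b_def)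
    also have "\<dots> = (\<Prod>j\<in>{1..n}. H (d (c j)) - L (d (c j)))" by (rule prod.reindex[OF inj, unfolded comp_def])
    also have "\<dots> = (\<Prod>j\<in>{1..n}. H j - L j)" by (rule prod.cong) (simp_all add: dc)
    finally show ?thesis .
  qed
  finally show "emeasure lborel {x::real^'n. \<forall>j\<in>{1..n}. L j \<le> x $ c j \<and> x $ c j \<le> H j}
       = ennreal (\<Prod>j\<in>{1..n}. H j - L j)" unfolding eq .
qed



lemma grad_fsum:
  "grad (fsum r k c) x $ i = (\<Sum>j=1..k. if c j = i then real (2 * r j) * (x $ c j) ^ (2 * r j - 1) else 0)"
proof -
  have eq: "(\<lambda>t. fsum r k c (x + t *\<^sub>R axis i 1)) = (\<lambda>t. \<Sum>j=1..k. (x $ c j + t * (if c j = i then 1 else 0)) ^ (2 * r j))"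
    by (auto simp: fsum_def axis_def fun_eq_iff intro!: sum.cong)
  have d: "((\<lambda>t. \<Sum>j=1..k. (x $ c j + t * (if c j = i then 1 else 0)) ^ (2 * r j)) has_field_derivative
     (\<Sum>j=1..k. real (2 * r j) * (x $ c j + 0 * (if c j = i then 1 else 0)) ^ (2 * r j - 1) * (0 * 0 + 1 * (if c j = i then 1 else 0)))) (at 0)"
    by (intro derivative_eq_intros) auto
  show ?thesis unfolding grad_def vec_lambda_beta eq
    by (subst DERIV_imp_deriv[OF d]) (auto intro!: sum.cong)
qed



lemma powr_inv_pow: "0 \<le> (t::real) \<Longrightarrow> 0 < n \<Longrightarrow> (t powr (1 / real n)) ^ n = t"
  by (cases "t = 0") (auto simp: powr_power powr_powr)

lemma pow_powr_inv: "0 \<le> (z::real) \<Longrightarrow> 0 < n \<Longrightarrow> (z ^ n) powr (1 / real n) = z"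
  by (cases "z = 0") (auto simp: powr_realpow[symmetric] powr_powr)

lemma abs_le_root: "0 \<le> (F::real) \<Longrightarrow> 0 < n \<Longrightarrow> \<bar>y\<bar> ^ n \<le> F \<Longrightarrow> \<bar>y\<bar> \<le> F powr (1 / real n)"
proof -
  assume a: "0 \<le> F" "0 < n" "\<bar>y\<bar> ^ n \<le> F"
  have "\<bar>y\<bar> = (\<bar>y\<bar> ^ n) powr (1 / real n)" using a by (simp add: pow_powr_inv)
  also have "\<dots> \<le> F powr (1 / real n)" using a by (intro powr_mono2) auto
  finally show ?thesis .
qed

lemma root_le_abs: "0 \<le> (t::real) \<Longrightarrow> 0 < n \<Longrightarrow> \<bar>y\<bar> \<le> t powr (1 / real n) \<Longrightarrow> \<bar>y\<bar> ^ n \<le> t"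
proof -
  assume a: "0 \<le> t" "0 < n" "\<bar>y\<bar> \<le> t powr (1 / real n)"
  have "\<bar>y\<bar> ^ n \<le> (t powr (1 / real n)) ^ n" using a by (intro power_mono) auto
  then show ?thesis using a by (simp add: powr_inv_pow)
qed

lemma root_le_pos: "0 \<le> (t::real) \<Longrightarrow> 0 < n \<Longrightarrow> t powr (1 / real n) \<le> y \<Longrightarrow> t \<le> y ^ n"
proof -
  assume a: "0 \<le> t" "0 < n" "t powr (1 / real n) \<le> y"
  have "(t powr (1 / real n)) ^ n \<le> y ^ n" using a by (intro power_mono) auto
  then show ?thesis using a by (simp add: powr_inv_pow)
qed

lemma ratio_bound:
  assumes F: "0 < (F::real)" and r: "0 < r" and y: "\<bar>y\<bar> ^ (2*r) \<le> F"
  shows "\<bar>y\<bar> ^ (2*r - 1) \<le> F * F powr (- 1 / real (2*r))"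
proof -
  have "\<bar>y\<bar> \<le> F powr (1 / real (2*r))" using abs_le_root[of F "2*r" y] F r y by simp
  then have "\<bar>y\<bar> ^ (2*r - 1) \<le> (F powr (1 / real (2*r))) ^ (2*r - 1)"
    by (simp add: power_mono)
  also have "\<dots> = F powr (real (2*r - 1) * (1 / real (2*r)))" using F by (simp add: powr_power)
  also have "real (2*r - 1) * (1 / real (2*r)) = 1 + (- 1 / real (2*r))" using r by (simp add: of_nat_diff field_simps)
  also have "F powr \<dots> = F * F powr (- 1 / real (2*r))" using F by (subst powr_add) simp
  finally show ?thesis .
qed

lemma sum_upto_k: "k \<le> n \<Longrightarrow> (\<Sum>j\<in>{1..n}. if j \<le> k then a j else 0) = (\<Sum>j=1..(k::nat). (a j :: real))"
  by (rule sum.mono_neutral_cong_right) auto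



lemma exists_dyadic:
  assumes "0 < (F::real)" "F \<le> 1"
  shows "\<exists>m::nat. 2 powr (- (real m + 1)) < F \<and> F \<le> 2 powr (- real m)"
proof -
  define m where "m = nat \<lfloor>- log 2 F\<rfloor>"
  have l: "log 2 F \<le> 0" using assms by simp
  have m1: "real m \<le> - log 2 F" using l unfolding m_def by linarith
  have m2: "- log 2 F < real m + 1" using l unfolding m_def by linarith
  have e: "2 powr (log 2 F) = F" using assms by simp
  have "2 powr (log 2 F) \<le> 2 powr (- real m)" using m1 by simp
  then have "F \<le> 2 powr (- real m)" using e by simp
  moreover have "2 powr (- (real m + 1)) < 2 powr (log 2 F)" using m2 by simp
  then have "2 powr (- (real m + 1)) < F" using e by simp
  ultimately show ?thesis by blast
qed

lemma grad_norm_upper: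
  "norm (grad (fsum r k c) x) \<le> (\<Sum>j=1..k. real (2*r j) * \<bar>x $ c j\<bar> ^ (2*r j - 1))"
proof -
  have "norm (grad (fsum r k c) x) \<le> (\<Sum>i\<in>UNIV. \<bar>grad (fsum r k c) x $ i\<bar>)" by (rule norm_le_l1_cart)
  also have "\<dots> \<le> (\<Sum>i\<in>UNIV. \<Sum>j=1..k. if c j = i then real (2*r j) * \<bar>x $ c j\<bar> ^ (2*r j - 1) else 0)"
    unfolding grad_fsum
    by (intro sum_mono order.trans[OF sum_abs]) (auto simp: abs_mult power_abs)
  also have "\<dots> = (\<Sum>j=1..k. \<Sum>i\<in>UNIV. if c j = i then real (2*r j) * \<bar>x $ c j\<bar> ^ (2*r j - 1) else 0)"
    by (rule sum.swap)
  also have "\<dots> = (\<Sum>j=1..k. real (2*r j) * \<bar>x $ c j\<bar> ^ (2*r j - 1))" by simp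
  finally show ?thesis .
qed

lemma grad_comp1:
  assumes "inj_on c {1..k}" "1 \<le> k"
  shows "grad (fsum r k c) x $ c 1 = real (2*r 1) * (x $ c 1) ^ (2*r 1 - 1)"
proof -
  have "\<And>j. j \<in> {1..k} \<Longrightarrow> (c j = c 1) = (j = 1)" using assms by (auto dest: inj_onD)
  then have "grad (fsum r k c) x $ c 1 = (\<Sum>j=1..k. if j = 1 then real (2 * r j) * (x $ c j) ^ (2 * r j - 1) else 0)"
    unfolding grad_fsum by (intro sum.cong) auto
  also have "\<dots> = real (2*r 1) * (x $ c 1) ^ (2*r 1 - 1)" using assms by (simp add: sum.delta)
  finally show ?thesis .
qed



lemma box_meas_scale:
  fixes c :: "nat \<Rightarrow> 'n::finite" and L H e d :: "nat \<Rightarrow> real"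
  assumes bij: "bij_betw c {1..n} UNIV" and t: "t > 0" and le: "\<forall>j\<in>{1..n}. L j \<le> H j"
    and eq: "\<forall>j\<in>{1..n}. H j - L j = t powr e j * d j"
  shows "emeasure lborel {x::real^'n. \<forall>j\<in>{1..n}. L j \<le> x $ c j \<and> x $ c j \<le> H j}
       = ennreal (t powr (\<Sum>j\<in>{1..n}. e j) * (\<Prod>j\<in>{1..n}. d j))"
proof -
  have "(\<Prod>j\<in>{1..n}. H j - L j) = (\<Prod>j\<in>{1..n}. t powr e j * d j)" using eq by (intro prod.cong) auto
  also have "\<dots> = t powr (\<Sum>j\<in>{1..n}. e j) * (\<Prod>j\<in>{1..n}. d j)"
    using t by (simp add: prod.distrib powr_sum)
  finally show ?thesis using box_meas(2)[OF bij le] by simp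
qed



lemma fsum_nonneg: "0 \<le> fsum r k c x"
  unfolding fsum_def by (intro sum_nonneg) (simp add: zero_le_even_power)

lemma fsum_term_le: "j \<in> {1..k} \<Longrightarrow> \<bar>x $ c j\<bar> ^ (2 * r j) \<le> fsum r k c x"
proof -
  assume j: "j \<in> {1..k}"
  have "\<bar>x $ c j\<bar> ^ (2 * r j) = (x $ c j) ^ (2 * r j)" by (simp add: power_even_abs)
  also have "\<dots> \<le> fsum r k c x" unfolding fsum_def
    by (rule member_le_sum[OF j]) (auto simp: zero_le_even_power)
  finally show ?thesis .
qed

lemma powr_le1_neg: "1 \<le> (x::real) \<Longrightarrow> e \<le> 0 \<Longrightarrow> x powr e \<le> 1"
  using powr_mono[of e 0 x] by simp

lemma upper:
  fixes r :: "nat \<Rightarrow> nat" and k n :: nat and c :: "nat \<Rightarrow> 'n::finite"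
    and U :: "(real^'n) set" and \<gamma> :: real
  assumes bij: "bij_betw c {1..n} UNIV" and k1: "1 \<le> k" and kn: "k \<le> n"
    and rpos: "\<forall>i\<in>{1..k}. 0 < r i" and rmin: "\<forall>j\<in>{1..k}. r 1 \<le> r j"
    and bnd: "bounded U" and \<gamma>: "\<gamma> > 0"
    and lt: "\<gamma> / real (2 * r 1) < (\<Sum>j=1..k. 1 / real (2 * r j))"
  shows "(\<integral>\<^sup>+ x\<in>U. ennreal ((norm (grad (fsum r k c) x) / \<bar>fsum r k c x\<bar>) powr \<gamma>) \<partial>lborel) < \<infinity>"
proof -
  obtain A where A: "A > 0" "\<forall>x\<in>U. norm x \<le> A" using bnd bounded_pos by blast
  define s where "s = \<gamma> / real (2 * r 1)"
  define \<sigma> where "\<sigma> = (\<Sum>j=1..k. 1 / real (2 * r j))"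
  define K where "K = (\<Sum>j=1..k. real (2 * r j))"
  define Hq where "Hq t j = (if j \<le> k then t powr (1 / real (2 * r j)) else A)" for t j
  define Q where "Q t = {x::real^'n. \<forall>j\<in>{1..n}. - Hq t j \<le> x $ c j \<and> x $ c j \<le> Hq t j}" for t
  define B where "B = {x::real^'n. \<forall>j\<in>{1..n}. - A \<le> x $ c j \<and> x $ c j \<le> A}"
  define tm where "tm m = 2 powr (- real m)" for m :: nat
  define a where "a m = K powr \<gamma> * 2 powr ((real m + 1) * s)" for m :: nat
  define g where "g x = (norm (grad (fsum r k c) x) / \<bar>fsum r k c x\<bar>) powr \<gamma>" for x
  have r1: "0 < r 1" using rpos k1 by auto
  have Kpos: "K > 0" unfolding K_def using rpos k1 by (intro sum_pos) auto
  have pw: "ennreal (g x) * indicator U x \<le>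
      ennreal (K powr \<gamma>) * indicator B x + (\<Sum>m. ennreal (a m) * indicator (Q (tm m)) x)" for x
  proof (cases "x \<in> U")
    case False then show ?thesis by simp
  next
    case xU: True
    have cA: "\<bar>x $ i\<bar> \<le> A" for i using A xU component_le_norm_cart[of x i] by force
    have cA2: "- A \<le> x $ i \<and> x $ i \<le> A" for i using cA[of i] by linarith
    have xB: "x \<in> B" unfolding B_def using cA2 by auto
    define F where "F = fsum r k c x"
    have F0: "0 \<le> F" unfolding F_def by (rule fsum_nonneg)
    show ?thesis
    proof (cases "F = 0")
      case True then show ?thesis by (simp add: g_def F_def[symmetric])
    next
      case False
      then have Fp: "0 < F" using F0 by simp
      have yj: "\<bar>x $ c j\<bar> ^ (2 * r j) \<le> F" if "j \<in> {1..k}" for j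
        unfolding F_def using that by (rule fsum_term_le)
      have R: "norm (grad (fsum r k c) x) / \<bar>F\<bar> \<le> (\<Sum>j=1..k. real (2 * r j) * F powr (- 1 / real (2 * r j)))"
      proof -
        have "norm (grad (fsum r k c) x) \<le> (\<Sum>j=1..k. real (2*r j) * \<bar>x $ c j\<bar> ^ (2*r j - 1))"
          by (rule grad_norm_upper)
        also have "\<dots> \<le> (\<Sum>j=1..k. real (2*r j) * (F * F powr (- 1 / real (2*r j))))"
          using yj rpos by (intro sum_mono mult_left_mono ratio_bound Fp) auto
        also have "\<dots> = F * (\<Sum>j=1..k. real (2 * r j) * F powr (- 1 / real (2 * r j)))"
          by (simp add: sum_distrib_left algebra_simps)
        finally show ?thesis using Fp by (simp add: field_simps)
      qed
      have nn: "0 \<le> norm (grad (fsum r k c) x) / \<bar>F\<bar>" by simp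
      show ?thesis
      proof (cases "F \<le> 1")
        case False
        have "(\<Sum>j=1..k. real (2 * r j) * F powr (- 1 / real (2 * r j))) \<le> K"
          unfolding K_def using False rpos
          by (intro sum_mono) (auto intro!: mult_left_le powr_le1_neg simp: divide_nonpos_pos)
        then have "g x \<le> K powr \<gamma>" unfolding g_def F_def[symmetric]
          using R nn \<gamma> by (intro powr_mono2) auto
        then have "ennreal (g x) * indicator U x \<le> ennreal (K powr \<gamma>) * indicator B x"
          using xU xB by (simp add: ennreal_leI)
        then show ?thesis by (rule order_trans) simp
      next
        case True
        obtain m where m: "2 powr (- (real m + 1)) < F" "F \<le> 2 powr (- real m)"
          using exists_dyadic[OF Fp True] by blast
        have "(\<Sum>j=1..k. real (2 * r j) * F powr (- 1 / real (2 * r j))) \<le>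
              (\<Sum>j=1..k. real (2 * r j) * F powr (- 1 / real (2 * r 1)))"
          using True Fp rpos rmin by (intro sum_mono mult_left_mono powr_mono') (auto simp: field_simps)
        also have "\<dots> = K * F powr (- 1 / real (2 * r 1))" unfolding K_def by (simp add: sum_distrib_right)
        also have "\<dots> \<le> K * (2 powr (- (real m + 1))) powr (- 1 / real (2 * r 1))"
          using m Kpos r1 by (intro mult_left_mono powr_mono2') auto
        also have "(2 powr (- (real m + 1))) powr (- 1 / real (2 * r 1)) = 2 powr ((real m + 1) / real (2 * r 1))"
          unfolding powr_powr by (rule arg_cong[where f="(powr) 2"]) (metis minus_mult_minus mult_1_right times_divide_eq_right)
        finally have R2: "norm (grad (fsum r k c) x) / \<bar>F\<bar> \<le> K * 2 powr ((real m + 1) / real (2 * r 1))"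
          using R by linarith
        have "g x \<le> (K * 2 powr ((real m + 1) / real (2 * r 1))) powr \<gamma>" unfolding g_def F_def[symmetric]
          using R2 nn \<gamma> by (intro powr_mono2) auto
        also have "\<dots> = a m" unfolding a_def s_def using Kpos
          by (simp add: powr_mult powr_powr)
        finally have ga: "g x \<le> a m" .
        have xQ: "x \<in> Q (tm m)"
          unfolding Q_def
        proof (intro CollectI ballI)
          fix j assume j: "j \<in> {1..n}"
          show "- Hq (tm m) j \<le> x $ c j \<and> x $ c j \<le> Hq (tm m) j"
          proof (cases "j \<le> k")
            case True
            have "\<bar>x $ c j\<bar> ^ (2 * r j) \<le> tm m" using yj[of j] j True m(2) unfolding tm_def by auto
            then have "\<bar>x $ c j\<bar> \<le> tm m powr (1 / real (2 * r j))"
              using rpos j True by (intro abs_le_root) (auto simp: tm_def)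
            then show ?thesis using True unfolding Hq_def by (simp add: abs_le_iff)
          next
            case False then show ?thesis using cA2[of "c j"] unfolding Hq_def by simp
          qed
        qed
        have "ennreal (g x) * indicator U x \<le> ennreal (a m) * indicator (Q (tm m)) x"
          using xU xQ ga by (simp add: ennreal_leI)
        also have "\<dots> \<le> (\<Sum>m. ennreal (a m) * indicator (Q (tm m)) x)"
          using sum_le_suminf[of "\<lambda>m. ennreal (a m) * indicator (Q (tm m)) x" "{m}", OF summableI]
          by (metis (no_types, lifting) Compl_iff finite.emptyI finite_insert sum.insert empty_iff sum.empty add.right_neutral zero_le insertI1)
        also have "\<dots> \<le> ennreal (K powr \<gamma>) * indicator B x + (\<Sum>m. ennreal (a m) * indicator (Q (tm m)) x)"
          by simp
        finally show ?thesis .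
      qed
    qed
  qed
  have Hq0: "0 \<le> Hq t j" for t j unfolding Hq_def using A by auto
  have QS[measurable]: "Q t \<in> sets borel" for t
    using box_meas(1)[OF bij, of "\<lambda>j. - Hq t j" "\<lambda>j. Hq t j"] Hq0 unfolding Q_def by force
  have BS[measurable]: "B \<in> sets borel"
    using box_meas(1)[OF bij, of "\<lambda>j. - A" "\<lambda>j. A"] A unfolding B_def by force
  have Bfin: "emeasure lborel B < \<infinity>"
    using box_meas(2)[OF bij, of "\<lambda>j. - A" "\<lambda>j. A"] A unfolding B_def by simp
  define D where "D = (\<Prod>j\<in>{1..n}. if j \<le> k then 2 else 2 * A)"
  have D0: "0 \<le> D" unfolding D_def using A by (intro prod_nonneg) auto
  have Qm: "emeasure lborel (Q t) = ennreal (t powr \<sigma> * D)" if t: "t > 0" for t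
  proof -
    have "emeasure lborel (Q t) = ennreal (t powr (\<Sum>j\<in>{1..n}. if j \<le> k then 1 / real (2 * r j) else 0) * D)"
      unfolding Q_def D_def
      by (rule box_meas_scale[OF bij t]) (use Hq0 t in \<open>auto simp: Hq_def\<close>)
    also have "(\<Sum>j\<in>{1..n}. if j \<le> k then 1 / real (2 * r j) else 0) = \<sigma>"
      unfolding \<sigma>_def by (rule sum_upto_k[OF kn])
    finally show ?thesis .
  qed
  define C where "C = K powr \<gamma> * 2 powr s * D"
  define q where "q = 2 powr (s - \<sigma>)"
  have "s - \<sigma> < 0" using lt unfolding s_def \<sigma>_def by linarith
  then have "2 powr (s - \<sigma>) < 2 powr 0" by (intro powr_less_mono) auto
  then have q: "0 < q" "q < 1" unfolding q_def by auto
  have tmeq: "a m * (tm m powr \<sigma> * D) = C * q ^ m" for m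
  proof -
    have "2 powr ((real m + 1) * s) * tm m powr \<sigma> = 2 powr ((real m + 1) * s + (- real m * \<sigma>))"
      unfolding tm_def powr_powr by (rule powr_add[symmetric])
    also have "\<dots> = 2 powr (s + real m * (s - \<sigma>))" by (simp add: algebra_simps)
    also have "\<dots> = 2 powr s * q ^ m" by (simp add: powr_add powr_power q_def)
    finally show ?thesis unfolding a_def C_def by (simp add: algebra_simps)
  qed
  have summ: "summable (\<lambda>m. C * q ^ m)" using q by (intro summable_mult summable_geometric) auto
  have C0: "0 \<le> C" unfolding C_def using D0 by simp
  have "(\<integral>\<^sup>+ x\<in>U. ennreal (g x) \<partial>lborel) \<le>
     (\<integral>\<^sup>+ x. (ennreal (K powr \<gamma>) * indicator B x + (\<Sum>m. ennreal (a m) * indicator (Q (tm m)) x)) \<partial>lborel)"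
    by (intro nn_integral_mono) (rule pw)
  also have "\<dots> = ennreal (K powr \<gamma>) * emeasure lborel B + (\<Sum>m. ennreal (a m) * emeasure lborel (Q (tm m)))"
    by (subst nn_integral_add) (auto simp: nn_integral_suminf nn_integral_cmult_indicator)
  also have "(\<Sum>m. ennreal (a m) * emeasure lborel (Q (tm m))) = (\<Sum>m. ennreal (C * q ^ m))"
  proof (rule suminf_cong)
    fix m
    have "tm m > 0" unfolding tm_def by simp
    then have "ennreal (a m) * emeasure lborel (Q (tm m)) = ennreal (a m * (tm m powr \<sigma> * D))"
      using Qm D0 by (simp add: ennreal_mult' a_def)
    then show "ennreal (a m) * emeasure lborel (Q (tm m)) = ennreal (C * q ^ m)" by (simp add: tmeq)
  qed
  also have "\<dots> = ennreal (\<Sum>m. C * q ^ m)" using summ C0 q by (intro suminf_ennreal2) auto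
  finally have le: "(\<integral>\<^sup>+ x\<in>U. ennreal (g x) \<partial>lborel) \<le> ennreal (K powr \<gamma>) * emeasure lborel B + ennreal (\<Sum>m. C * q ^ m)" .
  have "ennreal (K powr \<gamma>) * emeasure lborel B + ennreal (\<Sum>m. C * q ^ m) < \<infinity>"
    using Bfin by (simp add: ennreal_mult_less_top)
  with le show ?thesis unfolding g_def by (rule le_less_trans)
qed



lemma lower:
  fixes r :: "nat \<Rightarrow> nat" and k n :: nat and c :: "nat \<Rightarrow> 'n::finite"
    and U :: "(real^'n) set" and \<gamma> :: real
  assumes bij: "bij_betw c {1..n} UNIV" and k1: "1 \<le> k" and kn: "k \<le> n"
    and rpos: "\<forall>i\<in>{1..k}. 0 < r i" and rmax: "\<forall>j\<in>{1..k}. r j \<le> r k"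
    and opn: "open U" and U0: "0 \<in> U" and \<gamma>: "\<gamma> > 0"
    and ge: "(\<Sum>j=1..k. 1 / real (2 * r j)) \<le> \<gamma> / real (2 * r 1)"
  shows "\<not> (\<integral>\<^sup>+ x\<in>U. ennreal ((norm (grad (fsum r k c) x) / \<bar>fsum r k c x\<bar>) powr \<gamma>) \<partial>lborel) < \<infinity>"
proof
  assume fin: "(\<integral>\<^sup>+ x\<in>U. ennreal ((norm (grad (fsum r k c) x) / \<bar>fsum r k c x\<bar>) powr \<gamma>) \<partial>lborel) < \<infinity>"
  define g where "g x = (norm (grad (fsum r k c) x) / \<bar>fsum r k c x\<bar>) powr \<gamma>" for x
  obtain \<delta> where \<delta>: "\<delta> > 0" "ball 0 \<delta> \<subseteq> U" using opn U0 open_contains_ball by blast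
  have n1: "n \<ge> 1" using k1 kn by simp
  have cardn: "CARD('n) = n" using bij_betw_same_card[OF bij] by simp
  define e where "e = min 1 (\<delta> / (2 * real n))"
  have e: "0 < e" "e \<le> 1" "real n * e < \<delta>" using \<delta> n1 unfolding e_def by (auto simp: field_simps min_def)
  have inU: "x \<in> U" if "\<forall>i. \<bar>x $ i\<bar> \<le> e" for x :: "real^'n"
  proof -
    have "norm x \<le> (\<Sum>i\<in>UNIV. \<bar>x $ i\<bar>)" by (rule norm_le_l1_cart)
    also have "\<dots> \<le> (\<Sum>i\<in>(UNIV::'n set). e)" using that by (intro sum_mono) auto
    also have "\<dots> = real n * e" using cardn by simp
    finally show ?thesis using e \<delta> by auto
  qed
  have inj: "inj_on c {1..n}" and sur: "c ` {1..n} = UNIV" using bij by (auto simp: bij_betw_def)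
  have r1: "0 < r 1" using rpos k1 by auto
  define \<epsilon> where "\<epsilon> = e ^ (2 * r k)"
  have \<epsilon>: "0 < \<epsilon>" "\<epsilon> \<le> 1" unfolding \<epsilon>_def using e by (auto simp: power_le_one)
  have rootle: "t powr (1 / real (2 * r j)) \<le> e" if "0 < t" "t \<le> \<epsilon>" "j \<in> {1..k}" for t j
  proof -
    have "t powr (1 / real (2 * r j)) \<le> \<epsilon> powr (1 / real (2 * r j))" using that by (intro powr_mono2) auto
    also have "\<epsilon> \<le> e ^ (2 * r j)" unfolding \<epsilon>_def using e rmax that by (intro power_decreasing) auto
    then have "\<epsilon> powr (1 / real (2 * r j)) \<le> (e ^ (2 * r j)) powr (1 / real (2 * r j))"
      using \<epsilon> by (intro powr_mono2) auto
    also have "(e ^ (2 * r j)) powr (1 / real (2 * r j)) = e" using e rpos that by (intro pow_powr_inv) auto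
    finally show ?thesis .
  qed
  define a where "a j = 1 / real (2 * r j)" for j
  define Lp where "Lp t j = (if j = 1 then (t/2) powr a 1 else if j \<le> k then - ((t/2) powr a j) else - e)" for t j
  define Hp where "Hp t j = (if j = 1 then t powr a 1 else if j \<le> k then (t/2) powr a j else e)" for t j
  define P where "P t = {x::real^'n. \<forall>j\<in>{1..n}. Lp t j \<le> x $ c j \<and> x $ c j \<le> Hp t j}" for t
  define d where "d j = (if j = 1 then 1 - (1/2) powr a 1 else if j \<le> k then 2 * (1/2) powr a j else 2 * e)" for j
  define D where "D = (\<Prod>j\<in>{1..n}. d j)"
  define \<sigma> where "\<sigma> = (\<Sum>j=1..k. 1 / real (2 * r j))"
  define s where "s = \<gamma> / real (2 * r 1)"
  have apos: "a j > 0" if "j \<in> {1..k}" for j using rpos that unfolding a_def by auto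
  have half: "(1/2) powr a 1 < 1"
    using powr_less_mono2[of "a 1" "1/2" 1] apos[of 1] k1 by simp
  have dpos: "d j > 0" for j unfolding d_def using half e by auto
  have Dpos: "D > 0" unfolding D_def using dpos by (intro prod_pos) auto
  have LH: "Lp t j \<le> Hp t j" if "t > 0" for t j
    unfolding Lp_def Hp_def using that e apos[of 1] k1 by (auto intro!: powr_mono2)
  have Pmeas: "emeasure lborel (P t) = ennreal (t powr \<sigma> * D)" if t: "t > 0" for t
  proof -
    have "emeasure lborel (P t) = ennreal (t powr (\<Sum>j\<in>{1..n}. if j \<le> k then 1 / real (2 * r j) else 0) * D)"
      unfolding P_def D_def
    proof (rule box_meas_scale[OF bij t])
      show "\<forall>j\<in>{1..n}. Lp t j \<le> Hp t j" using LH t by auto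
      show "\<forall>j\<in>{1..n}. Hp t j - Lp t j = t powr (if j \<le> k then 1 / real (2 * r j) else 0) * d j"
        using t k1 by (auto simp: Lp_def Hp_def d_def a_def powr_mult[symmetric] algebra_simps)
    qed
    also have "(\<Sum>j\<in>{1..n}. if j \<le> k then 1 / real (2 * r j) else 0) = \<sigma>"
      unfolding \<sigma>_def by (rule sum_upto_k[OF kn])
    finally show ?thesis .
  qed
  define c0 where "c0 = (real (r 1) / real k) powr \<gamma>"
  have c0: "c0 > 0" unfolding c0_def using r1 k1 by simp
  have injk: "inj_on c {1..k}" using inj kn by (auto intro: inj_on_subset)
  have ptlow: "x \<in> U \<and> c0 * t powr (- s) \<le> g x" if x: "x \<in> P t" and t: "0 < t" "t \<le> \<epsilon>" for x t
  proof -
    have bn: "Lp t j \<le> x $ c j \<and> x $ c j \<le> Hp t j" if "j \<in> {1..n}" for j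
      using x that unfolding P_def by auto
    have tt: "(t/2) powr a j \<le> t powr a j" for j using t by (intro powr_mono2) (auto simp: a_def)
    have cE: "\<bar>x $ c j\<bar> \<le> e" if j: "j \<in> {1..n}" for j
    proof -
      consider "j = 1" | "j \<noteq> 1" "j \<le> k" | "\<not> j \<le> k" by blast
      then show ?thesis
      proof cases
        case 1
        have "0 \<le> x $ c j" using bn[OF j] 1 unfolding Lp_def by (auto intro: order_trans[OF powr_ge_zero])
        moreover have "x $ c j \<le> e" using bn[OF j] 1 rootle[OF t, of 1] k1 unfolding Hp_def a_def by auto
        ultimately show ?thesis by simp
      next
        case 2
        have "\<bar>x $ c j\<bar> \<le> (t/2) powr a j" using bn[OF j] 2 unfolding Lp_def Hp_def by auto
        also have "\<dots> \<le> e" using tt[of j] rootle[OF t, of j] 2 j unfolding a_def by auto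
        finally show ?thesis .
      next
        case 3 then show ?thesis using bn[OF j] unfolding Lp_def Hp_def using k1 by auto
      qed
    qed
    have "\<forall>i. \<bar>x $ i\<bar> \<le> e" using cE sur by (metis UNIV_I imageE)
    then have xU: "x \<in> U" by (rule inU)
    define y1 where "y1 = x $ c 1"
    have 1: "1 \<in> {1..n}" using n1 by simp
    have y1lo: "(t/2) powr a 1 \<le> y1" using bn[OF 1] unfolding Lp_def y1_def by simp
    have y1hi: "y1 \<le> t powr a 1" using bn[OF 1] unfolding Hp_def y1_def by simp
    have "0 < (t/2) powr a 1" using t by simp
    then have y1pos: "0 < y1" using y1lo by linarith
    have p1: "t/2 \<le> y1 ^ (2 * r 1)" using y1lo t r1 by (intro root_le_pos) (auto simp: a_def)
    have tj: "(x $ c j) ^ (2 * r j) \<le> t" if j: "j \<in> {1..k}" for j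
    proof -
      have "\<bar>x $ c j\<bar> \<le> t powr a j"
      proof (cases "j = 1")
        case True then show ?thesis using y1hi y1pos unfolding y1_def by simp
      next
        case False
        then have "\<bar>x $ c j\<bar> \<le> (t/2) powr a j" using bn[of j] j kn unfolding Lp_def Hp_def by auto
        then show ?thesis using tt[of j] by linarith
      qed
      then have "\<bar>x $ c j\<bar> ^ (2 * r j) \<le> t" using t rpos j by (intro root_le_abs) (auto simp: a_def)
      then show ?thesis by (simp add: power_even_abs)
    qed
    define F where "F = fsum r k c x"
    have Fle: "F \<le> real k * t"
    proof -
      have "F \<le> (\<Sum>j=1..k. t)" unfolding F_def fsum_def using tj by (intro sum_mono) auto
      then show ?thesis by simp
    qed
    have Fge: "t/2 \<le> F" using p1 fsum_term_le[of 1 k x c r] k1 y1pos unfolding F_def y1_def by simp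
    have Fpos: "0 < F" using Fge t by linarith
    have gc: "\<bar>grad (fsum r k c) x $ c 1\<bar> = real (2 * r 1) * y1 ^ (2 * r 1 - 1)"
      using grad_comp1[OF injk k1] y1pos unfolding y1_def by simp
    have nb: "real (2 * r 1) * y1 ^ (2 * r 1 - 1) \<le> norm (grad (fsum r k c) x)"
      using component_le_norm_cart[of "grad (fsum r k c) x" "c 1"] gc by simp
    have sc: "2 * r 1 = Suc (2 * r 1 - 1)" using r1 by simp
    have ysplit: "y1 ^ (2 * r 1) = y1 * y1 ^ (2 * r 1 - 1)" by (subst sc) (simp only: power_Suc)
    have "y1 * y1 ^ (2 * r 1 - 1) \<le> t powr a 1 * y1 ^ (2 * r 1 - 1)"
      using y1hi y1pos by (intro mult_right_mono) auto
    then have "t / 2 \<le> t powr a 1 * y1 ^ (2 * r 1 - 1)"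
      using p1 ysplit by linarith
    then have yb: "(t/2) / t powr a 1 \<le> y1 ^ (2 * r 1 - 1)" using t by (simp add: divide_le_eq mult.commute)
    have "(real (r 1) / real k) * t powr (- a 1) = real (2 * r 1) * ((t/2) / t powr a 1) / (real k * t)"
      using t k1 by (simp add: powr_minus field_simps)
    also have "\<dots> \<le> real (2 * r 1) * y1 ^ (2 * r 1 - 1) / (real k * t)"
      using yb t k1 by (intro divide_right_mono mult_left_mono) auto
    also have "\<dots> \<le> norm (grad (fsum r k c) x) / F"
      using nb Fle Fpos t k1 by (intro frac_le) auto
    finally have rat: "(real (r 1) / real k) * t powr (- a 1) \<le> norm (grad (fsum r k c) x) / \<bar>fsum r k c x\<bar>"
      using Fpos unfolding F_def by simp
    have "((real (r 1) / real k) * t powr (- a 1)) powr \<gamma> = (real (r 1) / real k) powr \<gamma> * (t powr (- a 1)) powr \<gamma>"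
      by (rule powr_mult)
    also have "(t powr (- a 1)) powr \<gamma> = t powr (- s)" unfolding powr_powr s_def a_def by simp
    finally have "c0 * t powr (- s) = ((real (r 1) / real k) * t powr (- a 1)) powr \<gamma>"
      unfolding c0_def by simp
    also have "\<dots> \<le> g x" unfolding g_def using rat r1 k1 \<gamma> by (intro powr_mono2) auto
    finally show ?thesis using xU by simp
  qed
  define tl where "tl l = \<epsilon> * (1/4) ^ l" for l :: nat
  have tl: "0 < tl l" "tl l \<le> \<epsilon>" "tl l \<le> 1" for l
    using \<epsilon> unfolding tl_def by (auto simp: mult_le_cancel_left1 power_le_one intro: order_trans[of _ \<epsilon>])
  have disj0: "False" if "x \<in> P (tl l)" "x \<in> P (tl l')" "l < l'" for x l l'
  proof -
    have 1: "1 \<in> {1..n}" using n1 by simp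
    have "Lp (tl l) 1 \<le> x $ c 1" using that(1) 1 unfolding P_def by blast
    then have lo: "(tl l / 2) powr a 1 \<le> x $ c 1" unfolding Lp_def by simp
    have "x $ c 1 \<le> Hp (tl l') 1" using that(2) 1 unfolding P_def by blast
    then have hi: "x $ c 1 \<le> tl l' powr a 1" unfolding Hp_def by simp
    have "(1/4::real) ^ l' \<le> (1/4) ^ Suc l" using that(3) by (intro power_decreasing) auto
    then have "tl l' \<le> tl l / 4" unfolding tl_def using \<epsilon> by (simp add: mult_left_mono)
    then have "tl l' < tl l / 2" using tl(1)[of l] by linarith
    then have "tl l' powr a 1 < (tl l / 2) powr a 1"
      using apos[of 1] k1 tl(1)[of l'] by (intro powr_less_mono2) auto
    then show False using lo hi by linarith
  qed
  have disj: "x \<notin> P (tl l')" if "x \<in> P (tl l)" "l' \<noteq> l" for x l l'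
    using disj0[of x l l'] disj0[of x l' l] that by (cases "l < l'") auto
  define b where "b l = c0 * tl l powr (- s)" for l
  have PS[measurable]: "P t \<in> sets borel" if "t > 0" for t
    using box_meas(1)[OF bij, of "Lp t" "Hp t"] LH[OF that] unfolding P_def by force
  have pw: "(\<Sum>l<N. ennreal (b l) * indicator (P (tl l)) x) \<le> ennreal (g x) * indicator U x" for N x
  proof (cases "\<exists>l0<N. x \<in> P (tl l0)")
    case True
    then obtain l0 where l0: "l0 < N" "x \<in> P (tl l0)" by blast
    have "(\<Sum>l<N. ennreal (b l) * indicator (P (tl l)) x) =
        ennreal (b l0) * indicator (P (tl l0)) x + (\<Sum>l\<in>{..<N} - {l0}. ennreal (b l) * indicator (P (tl l)) x)"
      using l0 by (subst sum.remove[of _ l0]) auto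
    also have "(\<Sum>l\<in>{..<N} - {l0}. ennreal (b l) * indicator (P (tl l)) x) = 0"
      using disj[OF l0(2)] by (intro sum.neutral) auto
    finally have eq: "(\<Sum>l<N. ennreal (b l) * indicator (P (tl l)) x) = ennreal (b l0)" using l0 by simp
    have "x \<in> U \<and> c0 * tl l0 powr (- s) \<le> g x" using ptlow[OF l0(2) tl(1) tl(2)] .
    then have "ennreal (b l0) \<le> ennreal (g x) * indicator U x" by (simp add: b_def ennreal_leI)
    then show ?thesis by (subst eq) assumption
  next
    case False
    then have "(\<Sum>l<N. ennreal (b l) * indicator (P (tl l)) x) = 0" by (intro sum.neutral) auto
    then show ?thesis by simp
  qed
  have big: "ennreal (real N * (c0 * D)) \<le> (\<integral>\<^sup>+ x\<in>U. ennreal (g x) \<partial>lborel)" for N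
  proof -
    have "ennreal (real N * (c0 * D)) = (\<Sum>l<N. ennreal (c0 * D))"
      using c0 Dpos by (simp add: ennreal_mult ennreal_of_nat_eq_real_of_nat)
    also have "\<dots> \<le> (\<Sum>l<N. ennreal (b l) * emeasure lborel (P (tl l)))"
    proof (intro sum_mono)
      fix l
      have "1 \<le> tl l powr (\<sigma> - s)"
        using powr_mono'[of "\<sigma> - s" 0 "tl l"] tl[of l] ge unfolding \<sigma>_def s_def by simp
      then have "c0 * D \<le> c0 * D * tl l powr (\<sigma> - s)" using c0 Dpos by simp
      also have "\<dots> = b l * (tl l powr \<sigma> * D)" unfolding b_def using tl[of l]
        by (simp add: powr_diff powr_minus divide_inverse)
      finally show "ennreal (c0 * D) \<le> ennreal (b l) * emeasure lborel (P (tl l))"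
        using Pmeas[OF tl(1)] c0 tl[of l] Dpos by (simp add: ennreal_mult'[symmetric] b_def ennreal_leI)
    qed
    also have "\<dots> = (\<integral>\<^sup>+ x. (\<Sum>l<N. ennreal (b l) * indicator (P (tl l)) x) \<partial>lborel)"
      using tl by (subst nn_integral_sum) (auto simp: nn_integral_cmult_indicator)
    also have "\<dots> \<le> (\<integral>\<^sup>+ x\<in>U. ennreal (g x) \<partial>lborel)"
      by (intro nn_integral_mono) (rule pw)
    finally show ?thesis .
  qed
  have fin': "(\<integral>\<^sup>+ x\<in>U. ennreal (g x) \<partial>lborel) < \<infinity>" using fin unfolding g_def .
  then have "\<exists>X\<ge>0. (\<integral>\<^sup>+ x\<in>U. ennreal (g x) \<partial>lborel) = ennreal X" unfolding infinity_ennreal_def less_top_ennreal by blast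
  then obtain X where X: "0 \<le> X" "(\<integral>\<^sup>+ x\<in>U. ennreal (g x) \<partial>lborel) = ennreal X"
    by (elim exE conjE)
  obtain N :: nat where N: "X / (c0 * D) < real N" using reals_Archimedean2 by blast
  have "real N * (c0 * D) \<le> X" using big[of N] X by (simp add: ennreal_le_iff)
  moreover have "X < real N * (c0 * D)" using N c0 Dpos by (simp add: divide_less_eq)
  ultimately show False by linarith
qed


theorem mainTheorem11:
  fixes r :: "nat \<Rightarrow> nat" and k n :: nat and c :: "nat \<Rightarrow> 'n::finite"
    and U :: "(real^'n) set" and \<gamma> :: real
  assumes "n = CARD('n)" and "n \<ge> 2" and "1 \<le> k" and "k \<le> n"
    and "bij_betw c {1..n} UNIV"
    and "\<forall>i\<in>{1..k}. 0 < r i"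
    and "\<forall>i j. 1 \<le> i \<longrightarrow> i \<le> j \<longrightarrow> j \<le> k \<longrightarrow> r i \<le> r j"
    and "open U" and "bounded U" and "0 \<in> U" and "\<gamma> > 0"
  shows "(2 \<le> k \<longrightarrow>
           ((\<integral>\<^sup>+ x\<in>U. ennreal ((norm (grad (fsum r k c) x) / \<bar>fsum r k c x\<bar>) powr \<gamma>) \<partial>lborel) < \<infinity>
             \<longleftrightarrow> \<gamma> < 1 + (\<Sum>i=2..k. real (r 1) / real (r i))))
       \<and> (k = 1 \<longrightarrow>
           ((\<integral>\<^sup>+ x\<in>U. ennreal ((norm (grad (fsum r k c) x) / \<bar>fsum r k c x\<bar>) powr \<gamma>) \<partial>lborel) < \<infinity>
             \<longleftrightarrow> \<gamma> < 1))"
proof -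
  note bij = assms(5) and k1 = assms(3) and kn = assms(4) and rpos = assms(6) and ord = assms(7)
  have rmin: "\<forall>j\<in>{1..k}. r 1 \<le> r j" using ord by auto
  have rmax: "\<forall>j\<in>{1..k}. r j \<le> r k" using ord by auto
  have r1: "0 < r 1" using rpos k1 by auto
  define \<Gamma> where "\<Gamma> = (\<Sum>j=1..k. real (r 1) / real (r j))"
  have sig: "\<Gamma> = real (2 * r 1) * (\<Sum>j=1..k. 1 / real (2 * r j))"
    unfolding \<Gamma>_def sum_distrib_left using rpos by (intro sum.cong) auto
  have equiv: "\<gamma> / real (2 * r 1) < (\<Sum>j=1..k. 1 / real (2 * r j)) \<longleftrightarrow> \<gamma> < \<Gamma>"
    unfolding sig using r1 by (simp add: divide_less_eq mult.commute)
  have main: "(\<integral>\<^sup>+ x\<in>U. ennreal ((norm (grad (fsum r k c) x) / \<bar>fsum r k c x\<bar>) powr \<gamma>) \<partial>lborel) < \<infinity>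
      \<longleftrightarrow> \<gamma> < \<Gamma>"
  proof
    assume fin: "(\<integral>\<^sup>+ x\<in>U. ennreal ((norm (grad (fsum r k c) x) / \<bar>fsum r k c x\<bar>) powr \<gamma>) \<partial>lborel) < \<infinity>"
    show "\<gamma> < \<Gamma>"
    proof (rule ccontr)
      assume "\<not> \<gamma> < \<Gamma>"
      then have "(\<Sum>j=1..k. 1 / real (2 * r j)) \<le> \<gamma> / real (2 * r 1)" using equiv by linarith
      from lower[OF bij k1 kn rpos rmax assms(8) assms(10) assms(11) this] fin show False by blast
    qed
  next
    assume "\<gamma> < \<Gamma>"
    then have "\<gamma> / real (2 * r 1) < (\<Sum>j=1..k. 1 / real (2 * r j))" using equiv by blast
    from upper[OF bij k1 kn rpos rmin assms(9) assms(11) this] show "(\<integral>\<^sup>+ x\<in>U. ennreal ((norm (grad (fsum r k c) x) / \<bar>fsum r k c x\<bar>) powr \<gamma>) \<partial>lborel) < \<infinity>" .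
  qed
  have G2: "\<Gamma> = 1 + (\<Sum>i=2..k. real (r 1) / real (r i))" if "2 \<le> k"
  proof -
    have "\<Gamma> = real (r 1) / real (r 1) + (\<Sum>i=Suc 1..k. real (r 1) / real (r i))"
      unfolding \<Gamma>_def using k1 by (subst sum.atLeast_Suc_atMost) auto
    then show ?thesis using r1 by (simp add: numeral_2_eq_2)
  qed
  have G1: "\<Gamma> = 1" if "k = 1" unfolding \<Gamma>_def using that r1 by simp
  show ?thesis using main G1 G2 by auto
qed

end
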